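(* Let $P$ be a prior distribution over $\mathcal F$, let $c>0$, $h\in(0,1]$, and $c_2$ with $0<c_2<h^2c$. Let $\kappa>0$, $\delta\in(0,1)$, $m\ge1$ and $\lambda>0$ with $$\frac{\lambda}{m}\le\min\Big(\frac{h^2c-c_2}{2(1+h^2c)(1+c_2)},\;\frac{4c_2h^2}{(1+c_2)(1+c_2h^2)}\Big(\kappa+\log\frac4\delta\Big)\Big).$$ Then with probability at least $1-\delta$ over $S=(z_1,\dots,z_m)\sim\mathcal D^m$, $$\sup_{Q:\ \mathrm{KL}(Q\|P)\le\kappa}\Big[\mathcal L_{\mathcal D}(Q)-\hat{\mathcal L}_S(Q)-\frac{c}{m}\sum_{i=1}^m\mathbb E_{f\sim Q}\big[f(z_i)-(1+h)\ell_Q(z_i)\big]^2\Big]\le\frac{4}{\lambda}\Big(\kappa+\log\frac4\delta\Big).$$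
   Context: Let $(\mathcal Z,\Sigma)$ be a measurable space and $\mathcal D$ a probability distribution on $\mathcal Z$. Let $\mathcal F$ be a class of measurable functions $f:\mathcal Z\to\{0,1\}$, equipped with a $\sigma$-algebra for which $(f,z)\mapsto f(z)$ is jointly measurable; "distributions over $\mathcal F$" are probability measures on it. $S=(z_1,\dots,z_m)\sim\mathcal D^m$ is an i.i.d. sample. For a distribution $Q$ over $\mathcal F$: $\ell_Q(z)=\mathbb E_{f\sim Q}f(z)$, $\mathcal L_{\mathcal D}(Q)=\mathbb E_{f\sim Q}\mathbb E_{z\sim\mathcal D}f(z)$, $\hat{\mathcal L}_S(Q)=\frac1m\sum_{i=1}^m\ell_Q(z_i)$. $\mathrm{KL}(Q\|P)$ is the relative entropy ($+\infty$ unless $Q\ll P$). The prior $P$ does not depend on $S$. The supremum is assumed measurable (or the probability is understood as outer probability). *)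

theory Defs
  imports "HOL-Probability.Probability"
begin

text \<open>KL(Q||P) \<le> k, with the convention KL = +infinity unless Q \<ll> P.
  KL(Q||P) = E_Q[ln(dQ/dP)]; since the negative part of ln(dQ/dP) is always
  Q-integrable, KL is finite iff ln(dQ/dP) is Q-integrable.\<close>
definition kl_le :: "'a measure \<Rightarrow> 'a measure \<Rightarrow> real \<Rightarrow> bool" where
  "kl_le Q P k \<longleftrightarrow> absolutely_continuous P Q \<and>
     integrable Q (entropy_density (exp 1) P Q) \<and> KL_divergence (exp 1) P Q \<le> k"

end

theory Submission imports Defs begin


lemma change_measure:
  fixes P Q :: "'a measure" and g :: "'a \<Rightarrow> real"
  assumes Q: "prob_space Q" and P: "prob_space P" and sQ: "sets Q = sets P" and kl: "kl_le Q P k"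
    and g[measurable]: "g \<in> borel_measurable P" and gi: "integrable Q g"
    and ge: "(\<integral>\<^sup>+x. ennreal (exp (g x)) \<partial>P) \<le> 1"
  shows "(\<integral>x. g x \<partial>Q) \<le> k"
proof -
  interpret P: prob_space P by fact
  interpret Q: prob_space Q by fact
  have ac: "absolutely_continuous P Q" and ei: "integrable Q (entropy_density (exp 1) P Q)"
    and KL: "KL_divergence (exp 1) P Q \<le> k" using kl unfolding kl_le_def by auto
  define r where "r = RN_deriv P Q"
  have r[measurable]: "r \<in> borel_measurable P" unfolding r_def by simp
  have Qd: "density P r = Q" unfolding r_def using P.density_RN_deriv[OF ac sQ] .
  have fin: "AE x in P. r x \<noteq> \<infinity>" unfolding r_def
    using P.RN_deriv_finite[OF _ ac sQ] Q.sigma_finite_measure_axioms by blast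
  have "AE x in density P r. 0 < r x \<and> r x \<noteq> \<infinity>"
    using fin by (subst AE_density) auto
  then have aeQ: "AE x in Q. 0 < enn2real (r x)" unfolding Qd
    by eventually_elim (auto simp: enn2real_positive_iff less_top)
  define rr where "rr x = enn2real (r x)" for x
  have rrP: "rr \<in> borel_measurable P" unfolding rr_def by measurable
  have rr[measurable]: "rr \<in> borel_measurable Q" using rrP measurable_cong_sets[OF sQ refl] by blast
  have gQ[measurable]: "g \<in> borel_measurable Q" using g measurable_cong_sets[OF sQ refl] by blast
  define hh where "hh x = exp (g x) / rr x" for x
  have hh[measurable]: "hh \<in> borel_measurable Q" unfolding hh_def by measurable
  have "(\<integral>\<^sup>+x. ennreal (hh x) \<partial>Q) = (\<integral>\<^sup>+x. r x * ennreal (hh x) \<partial>P)"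
  proof -
    have "hh \<in> borel_measurable P" using hh measurable_cong_sets[OF sQ refl] by blast
    then show ?thesis unfolding Qd[symmetric] by (subst nn_integral_density) auto
  qed
  also have "\<dots> \<le> (\<integral>\<^sup>+x. ennreal (exp (g x)) \<partial>P)"
  proof (rule nn_integral_mono_AE)
    show "AE x in P. r x * ennreal (hh x) \<le> ennreal (exp (g x))"
      using fin
    proof eventually_elim
      case (elim x)
      show ?case
      proof (cases "r x = 0")
        case True then show ?thesis by simp
      next
        case False
        then have pos: "0 < rr x" using elim unfolding rr_def by (auto simp: enn2real_positive_iff less_top zero_less_iff_neq_zero)
        have "r x = ennreal (rr x)" unfolding rr_def using elim by (simp add: ennreal_enn2real_if)
        then have "r x * ennreal (hh x) = ennreal (rr x) * ennreal (hh x)" by simp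
        also have "\<dots> = ennreal (rr x * hh x)"
          by (rule ennreal_mult[symmetric]) (use pos in \<open>auto simp: hh_def\<close>)
        also have "rr x * hh x = exp (g x)" using pos by (simp add: hh_def)
        finally show ?thesis by simp
      qed
    qed
  qed
  also have "\<dots> \<le> 1" by fact
  finally have hle: "(\<integral>\<^sup>+x. ennreal (hh x) \<partial>Q) \<le> 1" .
  have hnn: "AE x in Q. 0 \<le> hh x" using aeQ by eventually_elim (simp add: hh_def rr_def)
  have hint: "integrable Q hh"
  proof (rule integrableI_nonneg)
    show "(\<integral>\<^sup>+ x. ennreal (hh x) \<partial>Q) < \<infinity>" using hle
      by (metis ennreal_one_less_top infinity_ennreal_def le_less_trans)
  qed (use hnn in auto)
  have hI: "(\<integral>x. hh x \<partial>Q) \<le> 1"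
  proof -
    have "(\<integral>x. hh x \<partial>Q) = enn2real (\<integral>\<^sup>+ x. ennreal (hh x) \<partial>Q)"
      using hnn by (intro integral_eq_nn_integral) auto
    also have "\<dots> \<le> 1" using hle by (simp add: enn2real_leI)
    finally show ?thesis .
  qed
  have ed: "entropy_density (exp 1) P Q x = ln (rr x)" for x
    unfolding entropy_density_def rr_def r_def by (simp add: log_def)
  have "(\<integral>x. g x \<partial>Q) \<le> (\<integral>x. entropy_density (exp 1) P Q x + hh x - 1 \<partial>Q)"
  proof (rule integral_mono_AE)
    show "integrable Q (\<lambda>x. entropy_density (exp 1) P Q x + hh x - 1)"
      using ei hint by auto
    show "AE x in Q. g x \<le> entropy_density (exp 1) P Q x + hh x - 1"
      using aeQ
    proof eventually_elim
      case (elim x)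
      have "ln (exp (g x) / rr x) \<le> exp (g x) / rr x - 1"
        using elim by (intro ln_le_minus_one) (simp add: rr_def)
      then show ?case using elim by (simp add: ed hh_def ln_div rr_def)
    qed
  qed (fact gi)
  also have "\<dots> = KL_divergence (exp 1) P Q + (\<integral>x. hh x \<partial>Q) - 1"
    using ei hint by (simp add: KL_divergence_def Q.prob_space)
  also have "\<dots> \<le> k" using KL hI by simp
  finally show ?thesis .
qed



lemma one_minus_exp_ge:
  fixes a t :: real assumes "0 \<le> t" "1 + a * t \<le> a" and a1: "1 \<le> a"
  shows "t \<le> 1 - exp (- (a * t))"
proof -
  have at: "0 \<le> a * t" using assms a1 by simp
  have "1 + a * t \<le> exp (a * t)" by simp
  then have "exp (- (a * t)) \<le> 1 / (1 + a * t)"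
    using at by (simp add: exp_minus divide_simps)
  moreover have "t \<le> 1 - 1 / (1 + a * t)"
  proof -
    have "t * 1 \<le> t * (a - a * t)" using assms by (intro mult_left_mono) auto
    then have "t * (1 + a * t) \<le> a * t" by (simp add: algebra_simps)
    then show ?thesis using at by (simp add: field_simps)
  qed
  ultimately show ?thesis by linarith
qed

lemma factor_bound:
  fixes D :: "'z measure" and f :: "'z \<Rightarrow> real"
  assumes D: "prob_space D" and f[measurable]: "f \<in> borel_measurable D"
    and f01: "\<forall>z\<in>space D. f z \<in> {0, 1}" and t: "0 \<le> t" and at: "1 + a * t \<le> a" and a1: "1 \<le> a"
  shows "(\<integral>\<^sup>+z. ennreal (exp (t * (\<integral>y. f y \<partial>D) - a * t * f z)) \<partial>D) \<le> 1"
proof -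
  interpret D: prob_space D by fact
  define p where "p = (\<integral>y. f y \<partial>D)"
  define e where "e = 1 - exp (- (a * t))"
  have fi: "integrable D f"
    by (rule D.integrable_const_bound[where B=1]) (use f01 in \<open>auto intro!: AE_I2\<close>)
  have p01: "0 \<le> p"  unfolding p_def using f01 by (intro integral_nonneg_AE AE_I2) auto
  have te: "t \<le> e" unfolding e_def by (rule one_minus_exp_ge[OF t at a1])
  have eq: "exp (t * p - a * t * f z) = exp (t * p) * (1 - e * f z)" if "z \<in> space D" for z
  proof -
    have "f z = 0 \<or> f z = 1" using f01 that by auto
    then show ?thesis
    proof
      assume "f z = 1"
      then show ?thesis by (simp add: e_def exp_diff exp_minus divide_inverse)
    qed (simp add: e_def)
  qed
  have "(\<integral>\<^sup>+z. ennreal (exp (t * p - a * t * f z)) \<partial>D)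
      = (\<integral>\<^sup>+z. ennreal (exp (t * p) * (1 - e * f z)) \<partial>D)"
    by (intro nn_integral_cong) (simp add: eq)
  also have "\<dots> = ennreal (\<integral>z. exp (t * p) * (1 - e * f z) \<partial>D)"
  proof (rule nn_integral_eq_integral)
    show "integrable D (\<lambda>z. exp (t * p) * (1 - e * f z))" using fi by auto
    have "e \<le> 1" unfolding e_def by simp
    then show "AE z in D. 0 \<le> exp (t * p) * (1 - e * f z)"
      using f01 by (intro AE_I2) auto
  qed
  also have "\<dots> \<le> ennreal 1"
  proof (rule ennreal_leI)
  have "(\<integral>z. exp (t * p) * (1 - e * f z) \<partial>D) = exp (t * p) * (1 - e * p)"
    using fi by (simp add: p_def D.prob_space)
  also have "\<dots> \<le> exp (t * p) * exp (- (e * p))"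
    using exp_ge_add_one_self[of "-(e*p)"] by (intro mult_left_mono) auto
  also have "\<dots> = exp (p * (t - e))" by (simp add: exp_minus exp_diff field_simps)
  also have "\<dots> \<le> 1" using p01 te by (simp add: mult_nonneg_nonpos)
  finally show "(\<integral>z. exp (t * p) * (1 - e * f z) \<partial>D) \<le> 1" .
  qed
  finally have calc: "(\<integral>\<^sup>+z. ennreal (exp (t * p - a * t * f z)) \<partial>D) \<le> 1" by simp
  show ?thesis unfolding p_def[symmetric] by (rule calc)
qed

lemma moment:
  fixes D :: "'z measure" and f :: "'z \<Rightarrow> real" and m :: nat
  assumes D: "prob_space D" and f[measurable]: "f \<in> borel_measurable D"
    and f01: "\<forall>z\<in>space D. f z \<in> {0, 1}" and t: "0 \<le> t" and at: "1 + a * t \<le> a" and a1: "1 \<le> a"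
    and m: "m \<ge> 1"
  shows "(\<integral>\<^sup>+S. ennreal (exp (real m * t * ((\<integral>z. f z \<partial>D) - a / real m * (\<Sum>i<m. f (S i)))))
           \<partial>PiM {..<m} (\<lambda>_. D)) \<le> 1"
proof -
  interpret D: prob_space D by fact
  interpret PS: product_sigma_finite "\<lambda>_::nat. D"
    by (simp add: product_sigma_finite_def D.sigma_finite_measure_axioms)
  define p where "p = (\<integral>z. f z \<partial>D)"
  define F where "F z = ennreal (exp (t * p - a * t * f z))" for z
  have F[measurable]: "F \<in> borel_measurable D" unfolding F_def by measurable
  have eq: "ennreal (exp (real m * t * (p - a / real m * (\<Sum>i<m. f (S i))))) = (\<Prod>i<m. F (S i))" for S
  proof -
    have "real m * t * (p - a / real m * (\<Sum>i<m. f (S i))) = (\<Sum>i<m. t * p - a * t * f (S i))"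
      using m by (simp add: sum_subtractf sum_distrib_left field_simps)
    then have "exp (real m * t * (p - a / real m * (\<Sum>i<m. f (S i)))) = (\<Prod>i<m. exp (t * p - a * t * f (S i)))"
      by (simp add: exp_sum)
    then show ?thesis unfolding F_def by (simp add: prod_ennreal)
  qed
  have "(\<integral>\<^sup>+S. ennreal (exp (real m * t * (p - a / real m * (\<Sum>i<m. f (S i))))) \<partial>PiM {..<m} (\<lambda>_. D))
      = (\<integral>\<^sup>+S. (\<Prod>i<m. F (S i)) \<partial>PiM {..<m} (\<lambda>_. D))" by (simp only: eq)
  also have "\<dots> = (\<Prod>i<m. integral\<^sup>N D F)"
    by (rule PS.product_nn_integral_prod) auto
  also have "\<dots> \<le> 1"
  proof (rule prod_le_1)
    have "integral\<^sup>N D F \<le> 1" unfolding F_def p_def by (rule factor_bound[OF D f f01 t at a1])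
    then show "0 \<le> integral\<^sup>N D F \<and> integral\<^sup>N D F \<le> 1" for i by simp
  qed
  finally show ?thesis unfolding p_def .
qed



lemma var_bound:
  fixes Q :: "'a measure" and x :: "'a \<Rightarrow> real"
  assumes Q: "prob_space Q" and x[measurable]: "x \<in> borel_measurable Q"
    and x01: "\<forall>f\<in>space Q. x f \<in> {0, 1}" and h: "0 < h" "h \<le> 1"
  shows "0 \<le> (\<integral>f. x f \<partial>Q)" "(\<integral>f. x f \<partial>Q) \<le> 1"
    "h^2 * (\<integral>f. x f \<partial>Q) \<le> (\<integral>f. (x f - (1 + h) * (\<integral>g. x g \<partial>Q))^2 \<partial>Q)"
proof -
  interpret Q: prob_space Q by fact
  define l where "l = (\<integral>f. x f \<partial>Q)"
  define b where "b = 1 + h"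
  have xi: "integrable Q x"
    by (rule Q.integrable_const_bound[where B=1]) (use x01 in \<open>auto intro!: AE_I2\<close>)
  show l0: "0 \<le> (\<integral>f. x f \<partial>Q)" using x01 by (intro integral_nonneg_AE AE_I2) auto
  have "(\<integral>f. x f \<partial>Q) \<le> (\<integral>f. 1 \<partial>Q)"
    using x01 xi by (intro integral_mono) auto
  then show l1: "(\<integral>f. x f \<partial>Q) \<le> 1" by (simp add: Q.prob_space)
  have pw: "(x f - b * l)^2 = (1 - 2 * b * l) * x f + b^2 * l^2" if "f \<in> space Q" for f
  proof -
    have "x f = 0 \<or> x f = 1" using x01 that by auto
    then show ?thesis by (auto simp: power2_eq_square algebra_simps)
  qed
  have "(\<integral>f. (x f - b * l)^2 \<partial>Q) = (\<integral>f. (1 - 2 * b * l) * x f + b^2 * l^2 \<partial>Q)"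
    by (rule Bochner_Integration.integral_cong) (auto simp: pw)
  also have "\<dots> = (1 - 2 * b * l) * l + b^2 * l^2"
    using xi by (simp add: l_def Q.prob_space)
  finally have V: "(\<integral>f. (x f - b * l)^2 \<partial>Q) = (1 - 2 * b * l) * l + b^2 * l^2" .
  have "(1 - 2 * b * l) * l + b^2 * l^2 - h^2 * l = (1 - h^2) * (l * (1 - l))"
    by (simp add: b_def power2_eq_square algebra_simps)
  also have "\<dots> \<ge> 0"
  proof -
    have "h^2 \<le> 1" using h by (simp add: power_le_one)
    moreover have "0 \<le> l * (1 - l)" using l0 l1 unfolding l_def by simp
    ultimately show ?thesis by simp
  qed
  finally show "h^2 * (\<integral>f. x f \<partial>Q) \<le> (\<integral>f. (x f - (1 + h) * (\<integral>g. x g \<partial>Q))^2 \<partial>Q)"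
    using V unfolding l_def b_def by linarith
qed


theorem mainTheorem3:
  fixes D :: "'z measure" and P :: "('z \<Rightarrow> real) measure"
    and c h c2 \<kappa> \<delta> lam :: real and m :: nat
  assumes D: "prob_space D" and P: "prob_space P"
    and F01: "\<forall>f\<in>space P. f \<in> borel_measurable D \<and> (\<forall>z\<in>space D. f z \<in> {0, 1})"
    and joint: "(\<lambda>(f, z). f z) \<in> borel_measurable (P \<Otimes>\<^sub>M D)"
    and c: "c > 0" and h: "0 < h" "h \<le> 1"
    and c2: "0 < c2" "c2 < h^2 * c"
    and \<kappa>: "\<kappa> > 0" and \<delta>: "0 < \<delta>" "\<delta> < 1" and m: "m \<ge> 1" and lam: "lam > 0"
    and lam_m: "lam / real m \<le> min ((h^2 * c - c2) / (2 * (1 + h^2 * c) * (1 + c2)))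
                  (4 * c2 * h^2 / ((1 + c2) * (1 + c2 * h^2)) * (\<kappa> + ln (4 / \<delta>)))"
  shows "\<exists>A \<in> sets (PiM {..<m} (\<lambda>_. D)).
           measure (PiM {..<m} (\<lambda>_. D)) A \<ge> 1 - \<delta> \<and>
           (\<forall>S\<in>A. \<forall>Q. prob_space Q \<and> sets Q = sets P \<and> kl_le Q P \<kappa> \<longrightarrow>
              (\<integral>f. (\<integral>z. f z \<partial>D) \<partial>Q)
              - (1 / real m) * (\<Sum>i<m. \<integral>f. f (S i) \<partial>Q)
              - (c / real m) * (\<Sum>i<m. \<integral>f. (f (S i) - (1 + h) * (\<integral>g. g (S i) \<partial>Q))^2 \<partial>Q)
              \<le> 4 / lam * (\<kappa> + ln (4 / \<delta>)))"
proof -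
  interpret D: prob_space D by fact
  interpret P: prob_space P by fact
  define M where "M = PiM {..<m} (\<lambda>_. D)"
  interpret M: prob_space M unfolding M_def by (rule prob_space_PiM) (rule D)
  interpret MP: pair_sigma_finite M P
    by (simp add: pair_sigma_finite_def M.sigma_finite_measure_axioms P.sigma_finite_measure_axioms)
  define u where "u = h^2 * c"
  define a where "a = 1 + u"
  define t where "t = lam / real m"
  have mpos: "0 < real m" using m by simp
  have u: "0 < u" unfolding u_def using c h by simp
  have a1: "1 \<le> a" unfolding a_def using u by simp
  have t0: "0 \<le> t" unfolding t_def using lam by simp
  have lam_eq: "lam = real m * t" unfolding t_def using mpos by simp
  have tA: "t \<le> (u - c2) / (2 * (1 + u) * (1 + c2))" using lam_m unfolding t_def u_def by simp
  have at: "1 + a * t \<le> a"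
  proof -
    have "t * (2 * (1 + u) * (1 + c2)) \<le> u - c2"
      using tA u c2 by (simp add: pos_le_divide_eq mult.commute)
    moreover have "t * (1 + u) \<le> t * (2 * (1 + u) * (1 + c2))"
    proof (rule mult_left_mono[OF _ t0])
      have "0 \<le> (1 + u) * (1 + 2 * c2)" using u c2 by simp
      then show "1 + u \<le> 2 * (1 + u) * (1 + c2)" by (simp add: algebra_simps)
    qed
    ultimately have "t * (1 + u) \<le> u" using c2 by linarith
    then show ?thesis unfolding a_def by (simp add: algebra_simps)
  qed
  note joint[measurable]
  define E where "E f = (\<integral>z. f z \<partial>D)" for f :: "'z \<Rightarrow> real"
  have E_meas[measurable]: "E \<in> borel_measurable P"
    unfolding E_def by (rule D.borel_measurable_lebesgue_integral) (use joint in simp)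
  have comp: "(\<lambda>x. snd x (fst x i)) \<in> borel_measurable (M \<Otimes>\<^sub>M P)" if "i < m" for i
  proof -
    have "(\<lambda>x. (snd x, fst x i)) \<in> measurable (M \<Otimes>\<^sub>M P) (P \<Otimes>\<^sub>M D)"
      unfolding M_def
      by (rule measurable_Pair[OF measurable_snd measurable_compose[OF measurable_fst measurable_component_singleton]])
         (use that in simp)
    from measurable_compose[OF this joint] show ?thesis by simp
  qed
  define Phi where "Phi S f = lam * (E f - a / real m * (\<Sum>i<m. f (S i)))" for S and f :: "'z \<Rightarrow> real"
  have PhiM: "(\<lambda>x. Phi (fst x) (snd x)) \<in> borel_measurable (M \<Otimes>\<^sub>M P)"
    unfolding Phi_def
    by (intro borel_measurable_times borel_measurable_diff borel_measurable_const
        borel_measurable_sum comp measurable_compose[OF measurable_snd E_meas]) auto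
  define FF where "FF S f = ennreal (exp (Phi S f))" for S f
  have FFM: "case_prod FF \<in> borel_measurable (M \<Otimes>\<^sub>M P)"
  proof -
    have "(\<lambda>x. ennreal (exp (Phi (fst x) (snd x)))) \<in> borel_measurable (M \<Otimes>\<^sub>M P)"
      using PhiM by measurable
    then show ?thesis unfolding FF_def by (simp add: split_beta')
  qed
  define G where "G S = (\<integral>\<^sup>+f. FF S f \<partial>P)" for S
  have GM[measurable]: "G \<in> borel_measurable M" unfolding G_def
    by (rule P.borel_measurable_nn_integral[OF FFM])
  have intG: "(\<integral>\<^sup>+S. G S \<partial>M) \<le> 1"
  proof -
    have "(\<integral>\<^sup>+S. G S \<partial>M) = (\<integral>\<^sup>+f. (\<integral>\<^sup>+S. FF S f \<partial>M) \<partial>P)"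
      unfolding G_def by (rule MP.Fubini'[OF FFM, symmetric])
    also have "\<dots> \<le> (\<integral>\<^sup>+f. 1 \<partial>P)"
    proof (rule nn_integral_mono)
      fix f assume f: "f \<in> space P"
      then have fm: "f \<in> borel_measurable D" and f01: "\<forall>z\<in>space D. f z \<in> {0, 1}" using F01 by auto
      have "(\<integral>\<^sup>+S. FF S f \<partial>M) = (\<integral>\<^sup>+S. ennreal (exp (real m * t * ((\<integral>z. f z \<partial>D) - a / real m * (\<Sum>i<m. f (S i)))))
           \<partial>PiM {..<m} (\<lambda>_. D))"
        unfolding FF_def Phi_def E_def M_def lam_eq ..
      also have "\<dots> \<le> 1" by (rule moment[OF D fm f01 t0 at a1 m])
      finally show "(\<integral>\<^sup>+S. FF S f \<partial>M) \<le> 1" .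
    qed
    also have "\<dots> = 1" by (simp add: P.emeasure_space_1)
    finally show ?thesis .
  qed
  define B where "B = {S \<in> space M. 1 \<le> ennreal \<delta> * G S}"
  have Bsets: "B \<in> sets M" unfolding B_def by measurable
  have "emeasure M B \<le> ennreal \<delta> * (\<integral>\<^sup>+S. G S * indicator (space M) S \<partial>M)"
    unfolding B_def by (rule nn_integral_Markov_inequality) auto
  also have "(\<integral>\<^sup>+S. G S * indicator (space M) S \<partial>M) = (\<integral>\<^sup>+S. G S \<partial>M)"
    by (intro nn_integral_cong) auto
  also have "ennreal \<delta> * \<dots> \<le> ennreal \<delta> * 1"
    by (intro mult_left_mono intG) auto
  finally have "emeasure M B \<le> ennreal \<delta>" by simp
  then have mB: "measure M B \<le> \<delta>"
    using \<delta> by (simp add: M.emeasure_eq_measure)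
  define A where "A = space M - B"
  have Asets: "A \<in> sets M" unfolding A_def using Bsets by auto
  have mA: "measure M A \<ge> 1 - \<delta>"
    unfolding A_def using M.prob_compl[OF Bsets] mB by simp
  show ?thesis
  proof (intro bexI[of _ A] conjI ballI allI impI)
    show "A \<in> sets (PiM {..<m} (\<lambda>_. D))" using Asets unfolding M_def .
    show "measure (PiM {..<m} (\<lambda>_. D)) A \<ge> 1 - \<delta>" using mA unfolding M_def .
    fix S Q assume SA: "S \<in> A" and HQ: "prob_space Q \<and> sets Q = sets P \<and> kl_le Q P \<kappa>"
    from HQ have Q: "prob_space Q" and sQ: "sets Q = sets P" and kl: "kl_le Q P \<kappa>" by auto
    interpret Q: prob_space Q by fact
    have spQ: "space Q = space P" using sets_eq_imp_space_eq[OF sQ] .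
    have SM: "S \<in> space M" and GS: "\<not> 1 \<le> ennreal \<delta> * G S" using SA unfolding A_def B_def by auto
    have Si: "S i \<in> space D" if "i < m" for i
      using SM that unfolding M_def by (auto simp: space_PiM)
    have xP: "(\<lambda>f. f (S i)) \<in> borel_measurable P" if "i < m" for i
    proof -
      have "(\<lambda>f. (f, S i)) \<in> measurable P (P \<Otimes>\<^sub>M D)" by (rule measurable_Pair2'[OF Si[OF that]])
      from measurable_compose[OF this joint] show ?thesis by simp
    qed
    have xQ: "(\<lambda>f. f (S i)) \<in> borel_measurable Q" if "i < m" for i
      using xP[OF that] measurable_cong_sets[OF sQ refl] by blast
    have x01: "\<forall>f\<in>space Q. f (S i) \<in> {0, 1}" if "i < m" for i
      using F01 Si[OF that] spQ by auto
    have xi: "integrable Q (\<lambda>f. f (S i))" if "i < m" for i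
      by (rule Q.integrable_const_bound[where B=1]) (use x01[OF that] xQ[OF that] in \<open>auto intro!: AE_I2\<close>)
    have E01: "0 \<le> E f \<and> E f \<le> 1" if "f \<in> space P" for f
    proof -
      have fm: "f \<in> borel_measurable D" and f01: "\<forall>z\<in>space D. f z \<in> {0, 1}" using F01 that by auto
      have "E f \<le> (\<integral>z. 1 \<partial>D)" unfolding E_def
        using f01 fm by (intro integral_mono D.integrable_const_bound[where B=1]) (auto intro!: AE_I2)
      moreover have "0 \<le> E f" unfolding E_def using f01 by (intro integral_nonneg_AE AE_I2) auto
      ultimately show ?thesis by (simp add: D.prob_space)
    qed
    have EQ: "E \<in> borel_measurable Q" using E_meas measurable_cong_sets[OF sQ refl] by blast
    have Ei: "integrable Q E"
      by (rule Q.integrable_const_bound[where B=1]) (use E01 spQ EQ in \<open>auto intro!: AE_I2\<close>)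
    define g where "g f = Phi S f + ln \<delta>" for f
    have PhiP: "(\<lambda>f. Phi S f) \<in> borel_measurable P"
      using measurable_Pair2[OF PhiM SM] by simp
    have gP: "g \<in> borel_measurable P" unfolding g_def using PhiP by measurable
    have gi: "integrable Q g"
    proof -
      have "integrable Q (\<lambda>f. lam * (E f - a / real m * (\<Sum>i<m. f (S i))) + ln \<delta>)"
        using Ei xi by (intro Bochner_Integration.integrable_add integrable_mult_right
            Bochner_Integration.integrable_diff Bochner_Integration.integrable_sum Q.integrable_const) auto
      then show ?thesis unfolding g_def Phi_def .
    qed
    have ge: "(\<integral>\<^sup>+f. ennreal (exp (g f)) \<partial>P) \<le> 1"
    proof -
      have FFS: "(\<lambda>f. FF S f) \<in> borel_measurable P" using measurable_Pair2[OF FFM SM] by simp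
      have "(\<integral>\<^sup>+f. ennreal (exp (g f)) \<partial>P) = (\<integral>\<^sup>+f. ennreal \<delta> * FF S f \<partial>P)"
        unfolding g_def FF_def using \<delta>
        by (intro nn_integral_cong) (simp add: exp_add ennreal_mult' mult.commute)
      also have "\<dots> = ennreal \<delta> * G S" unfolding G_def
        by (rule nn_integral_cmult[OF FFS])
      also have "\<dots> \<le> 1" using GS by simp
      finally show ?thesis .
    qed
    have gle: "(\<integral>f. g f \<partial>Q) \<le> \<kappa>" by (rule change_measure[OF Q P sQ kl gP gi ge])
    define l where "l i = (\<integral>f. f (S i) \<partial>Q)" for i
    have geq: "(\<integral>f. g f \<partial>Q) = lam * ((\<integral>f. E f \<partial>Q) - a / real m * (\<Sum>i<m. l i)) + ln \<delta>"
    proof -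
      define sm where "sm f = (\<Sum>i<m. f (S i))" for f :: "'z \<Rightarrow> real"
      have smi: "integrable Q sm" unfolding sm_def using xi by (intro Bochner_Integration.integrable_sum) auto
      have smI: "(\<integral>f. sm f \<partial>Q) = (\<Sum>i<m. l i)" unfolding sm_def l_def
        by (rule Bochner_Integration.integral_sum) (use xi in auto)
      have i1: "integrable Q (\<lambda>f. E f - a / real m * sm f)" using Ei smi by auto
      have "(\<integral>f. g f \<partial>Q) = (\<integral>f. lam * (E f - a / real m * sm f) + ln \<delta> \<partial>Q)"
        unfolding g_def Phi_def sm_def ..
      also have "\<dots> = (\<integral>f. lam * (E f - a / real m * sm f) \<partial>Q) + ln \<delta>"
        using i1 by (subst Bochner_Integration.integral_add) (auto simp: Q.prob_space)
      also have "(\<integral>f. lam * (E f - a / real m * sm f) \<partial>Q) = lam * (\<integral>f. E f - a / real m * sm f \<partial>Q)"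
        by simp
      also have "(\<integral>f. E f - a / real m * sm f \<partial>Q) = (\<integral>f. E f \<partial>Q) - a / real m * (\<integral>f. sm f \<partial>Q)"
        using Ei smi by (subst Bochner_Integration.integral_diff) auto
      finally show ?thesis unfolding smI .
    qed
    have vb: "h^2 * l i \<le> (\<integral>f. (f (S i) - (1 + h) * (\<integral>g. g (S i) \<partial>Q))^2 \<partial>Q)"
      and l0: "0 \<le> l i" if "i < m" for i
      using var_bound[OF Q xQ[OF that] x01[OF that] h] unfolding l_def by auto
    have sv: "h^2 * (\<Sum>i<m. l i) \<le> (\<Sum>i<m. \<integral>f. (f (S i) - (1 + h) * (\<integral>g. g (S i) \<partial>Q))^2 \<partial>Q)"
      unfolding sum_distrib_left by (intro sum_mono vb) auto
    have sl0: "0 \<le> (\<Sum>i<m. l i)" by (intro sum_nonneg l0) auto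
    have "(\<integral>f. (\<integral>z. f z \<partial>D) \<partial>Q)
              - (1 / real m) * (\<Sum>i<m. \<integral>f. f (S i) \<partial>Q)
              - (c / real m) * (\<Sum>i<m. \<integral>f. (f (S i) - (1 + h) * (\<integral>g. g (S i) \<partial>Q))^2 \<partial>Q)
          \<le> (\<integral>f. E f \<partial>Q) - (1 / real m) * (\<Sum>i<m. l i) - (c / real m) * (h^2 * (\<Sum>i<m. l i))"
      using sv c mpos unfolding E_def l_def by (intro diff_mono mult_left_mono) auto
    also have "\<dots> = (\<integral>f. E f \<partial>Q) - a / real m * (\<Sum>i<m. l i)"
      unfolding a_def u_def by (simp add: add_divide_distrib algebra_simps)
    also have "\<dots> = ((\<integral>f. g f \<partial>Q) - ln \<delta>) / lam" using geq lam by (simp add: field_simps)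
    also have "\<dots> \<le> (\<kappa> - ln \<delta>) / lam" using gle lam by (simp add: divide_right_mono)
    also have "\<dots> \<le> 4 / lam * (\<kappa> + ln (4 / \<delta>))"
    proof -
      define L where "L = ln (4 / \<delta>)"
      define L4 where "L4 = ln (4::real)"
      define Ld where "Ld = ln \<delta>"
      have "L = L4 - Ld" unfolding L_def L4_def Ld_def using \<delta> by (simp add: ln_div)
      moreover have "0 \<le> L4" unfolding L4_def by simp
      moreover have "Ld \<le> 0" unfolding Ld_def using \<delta> by simp
      ultimately have "\<kappa> - Ld \<le> 4 * (\<kappa> + L)" using \<kappa> by (simp add: algebra_simps)
      then have "\<kappa> - ln \<delta> \<le> 4 * (\<kappa> + ln (4 / \<delta>))" unfolding L_def Ld_def .
      then show ?thesis using lam by (simp add: divide_right_mono)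
    qed
    finally show "(\<integral>f. (\<integral>z. f z \<partial>D) \<partial>Q)
              - (1 / real m) * (\<Sum>i<m. \<integral>f. f (S i) \<partial>Q)
              - (c / real m) * (\<Sum>i<m. \<integral>f. (f (S i) - (1 + h) * (\<integral>g. g (S i) \<partial>Q))^2 \<partial>Q)
              \<le> 4 / lam * (\<kappa> + ln (4 / \<delta>))" .
  qed
qed

end
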